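(* Let $H$ be a Hopf algebra over a field $\mathbb{k}$ containing a subalgebra $P$ which is either a polynomial algebra $\mathbb{k}[x]$ or a Laurent polynomial algebra $\mathbb{k}[x^{\pm1}]$ in some element $x$, such that $H$ is finitely generated as a right $P$-module. Then a left ideal $I$ of $H$ has finite codimension in $H$ if and only if $I\cap P\ne0$. *)

theory Defs
  imports Main "HOL.Vector_Spaces"
begin

definition k_algebra :: "('k::field \<Rightarrow> 'h::ring_1 \<Rightarrow> 'h) \<Rightarrow> bool" where
  "k_algebra scale \<longleftrightarrow> vector_space scale \<and>
     (\<forall>c a b. scale c (a * b) = scale c a * b \<and> scale c (a * b) = a * scale c b)"

definition k_lin :: "('k::field \<Rightarrow> 'h::ring_1 \<Rightarrow> 'h) \<Rightarrow> ('h \<Rightarrow> 'k) \<Rightarrow> bool" where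
  "k_lin scale f \<longleftrightarrow> (\<forall>a b. f (a + b) = f a + f b) \<and> (\<forall>c a. f (scale c a) = c * f a)"

definition k_lin_endo :: "('k::field \<Rightarrow> 'h::ring_1 \<Rightarrow> 'h) \<Rightarrow> ('h \<Rightarrow> 'h) \<Rightarrow> bool" where
  "k_lin_endo scale f \<longleftrightarrow> (\<forall>a b. f (a + b) = f a + f b) \<and> (\<forall>c a. f (scale c a) = scale c (f a))"

text \<open>Elements of H \<otimes> H are represented by finite lists of simple tensors; two such lists
  denote the same tensor iff every bilinear form H \<times> H \<rightarrow> k takes the same value on them
  (over a field, bilinear forms separate the points of H \<otimes> H).\<close>
definition bilin_form :: "('k::field \<Rightarrow> 'h::ring_1 \<Rightarrow> 'h) \<Rightarrow> ('h \<Rightarrow> 'h \<Rightarrow> 'k) \<Rightarrow> bool" where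
  "bilin_form scale \<beta> \<longleftrightarrow> (\<forall>a. k_lin scale (\<beta> a)) \<and> (\<forall>b. k_lin scale (\<lambda>a. \<beta> a b))"

definition trilin_form :: "('k::field \<Rightarrow> 'h::ring_1 \<Rightarrow> 'h) \<Rightarrow> ('h \<Rightarrow> 'h \<Rightarrow> 'h \<Rightarrow> 'k) \<Rightarrow> bool" where
  "trilin_form scale \<tau> \<longleftrightarrow> (\<forall>a b. k_lin scale (\<tau> a b)) \<and> (\<forall>a c. k_lin scale (\<lambda>b. \<tau> a b c))
      \<and> (\<forall>b c. k_lin scale (\<lambda>a. \<tau> a b c))"

definition tens2_eq :: "('k::field \<Rightarrow> 'h::ring_1 \<Rightarrow> 'h) \<Rightarrow> ('h \<times> 'h) list \<Rightarrow> ('h \<times> 'h) list \<Rightarrow> bool" where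
  "tens2_eq scale xs ys \<longleftrightarrow> (\<forall>\<beta>. bilin_form scale \<beta> \<longrightarrow>
      sum_list (map (\<lambda>(a, b). \<beta> a b) xs) = sum_list (map (\<lambda>(a, b). \<beta> a b) ys))"

definition tens3_eq :: "('k::field \<Rightarrow> 'h::ring_1 \<Rightarrow> 'h) \<Rightarrow> ('h \<times> 'h \<times> 'h) list \<Rightarrow> ('h \<times> 'h \<times> 'h) list \<Rightarrow> bool" where
  "tens3_eq scale xs ys \<longleftrightarrow> (\<forall>\<tau>. trilin_form scale \<tau> \<longrightarrow>
      sum_list (map (\<lambda>(a, b, c). \<tau> a b c) xs) = sum_list (map (\<lambda>(a, b, c). \<tau> a b c) ys))"

definition hopf_algebra :: "('k::field \<Rightarrow> 'h::ring_1 \<Rightarrow> 'h) \<Rightarrow> ('h \<Rightarrow> ('h \<times> 'h) list)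
    \<Rightarrow> ('h \<Rightarrow> 'k) \<Rightarrow> ('h \<Rightarrow> 'h) \<Rightarrow> bool" where
  "hopf_algebra scale \<Delta> \<epsilon> S \<longleftrightarrow> k_algebra scale \<and>
     \<comment> \<open>\<Delta> is k-linear\<close>
     (\<forall>a b. tens2_eq scale (\<Delta> (a + b)) (\<Delta> a @ \<Delta> b)) \<and>
     (\<forall>c a. tens2_eq scale (\<Delta> (scale c a)) (map (\<lambda>(u, v). (scale c u, v)) (\<Delta> a))) \<and>
     \<comment> \<open>\<Delta> is an algebra map\<close>
     (\<forall>a b. tens2_eq scale (\<Delta> (a * b)) [(u * u', v * v'). (u, v) \<leftarrow> \<Delta> a, (u', v') \<leftarrow> \<Delta> b]) \<and>
     tens2_eq scale (\<Delta> 1) [(1, 1)] \<and>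
     \<comment> \<open>coassociativity\<close>
     (\<forall>a. tens3_eq scale
        (concat (map (\<lambda>(a1, a2). map (\<lambda>(u, v). (u, v, a2)) (\<Delta> a1)) (\<Delta> a)))
        (concat (map (\<lambda>(a1, a2). map (\<lambda>(u, v). (a1, u, v)) (\<Delta> a2)) (\<Delta> a)))) \<and>
     \<comment> \<open>counit: an algebra map H \<rightarrow> k satisfying the counit axioms\<close>
     k_lin scale \<epsilon> \<and> (\<forall>a b. \<epsilon> (a * b) = \<epsilon> a * \<epsilon> b) \<and> \<epsilon> 1 = 1 \<and>
     (\<forall>a. sum_list (map (\<lambda>(u, v). scale (\<epsilon> u) v) (\<Delta> a)) = a) \<and>
     (\<forall>a. sum_list (map (\<lambda>(u, v). scale (\<epsilon> v) u) (\<Delta> a)) = a) \<and>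
     \<comment> \<open>antipode\<close>
     k_lin_endo scale S \<and>
     (\<forall>a. sum_list (map (\<lambda>(u, v). S u * v) (\<Delta> a)) = scale (\<epsilon> a) 1) \<and>
     (\<forall>a. sum_list (map (\<lambda>(u, v). u * S v) (\<Delta> a)) = scale (\<epsilon> a) 1)"

definition is_poly_subalg :: "('k::field \<Rightarrow> 'h::ring_1 \<Rightarrow> 'h) \<Rightarrow> 'h set \<Rightarrow> 'h \<Rightarrow> bool" where
  "is_poly_subalg scale P x \<longleftrightarrow> inj (\<lambda>n::nat. x ^ n) \<and>
     \<not> module.dependent scale (range (\<lambda>n::nat. x ^ n)) \<and>
     P = module.span scale (range (\<lambda>n::nat. x ^ n))"

definition zpow :: "'h::ring_1 \<Rightarrow> 'h \<Rightarrow> int \<Rightarrow> 'h" where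
  "zpow x y i = (if 0 \<le> i then x ^ nat i else y ^ nat (- i))"

definition is_laurent_subalg :: "('k::field \<Rightarrow> 'h::ring_1 \<Rightarrow> 'h) \<Rightarrow> 'h set \<Rightarrow> 'h \<Rightarrow> bool" where
  "is_laurent_subalg scale P x \<longleftrightarrow> (\<exists>y. x * y = 1 \<and> y * x = 1 \<and>
     inj (zpow x y) \<and>
     \<not> module.dependent scale (range (zpow x y)) \<and>
     P = module.span scale (range (zpow x y)))"

definition fg_right_module :: "'h::ring_1 set \<Rightarrow> bool" where
  "fg_right_module P \<longleftrightarrow> (\<exists>G. finite G \<and>
     (\<forall>h. \<exists>p. (\<forall>g\<in>G. p g \<in> P) \<and> h = (\<Sum>g\<in>G. g * p g)))"

definition left_ideal :: "('k::field \<Rightarrow> 'h::ring_1 \<Rightarrow> 'h) \<Rightarrow> 'h set \<Rightarrow> bool" where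
  "left_ideal scale I \<longleftrightarrow> 0 \<in> I \<and> (\<forall>a\<in>I. \<forall>b\<in>I. a + b \<in> I) \<and>
     (\<forall>c. \<forall>a\<in>I. scale c a \<in> I) \<and> (\<forall>h. \<forall>a\<in>I. h * a \<in> I)"

definition finite_codim :: "('k::field \<Rightarrow> 'h::ring_1 \<Rightarrow> 'h) \<Rightarrow> 'h set \<Rightarrow> bool" where
  "finite_codim scale I \<longleftrightarrow> (\<exists>F. finite F \<and> (\<forall>h. \<exists>g\<in>module.span scale F. h - g \<in> I))"

end

theory Submission
  imports Defs
begin

lemma pow_cancel:
  fixes a b :: "'a::ring_1"
  assumes "a * b = 1"
  shows "a ^ m * b ^ n = (if n \<le> m then a ^ (m - n) else b ^ (n - m))"
proof (induction m arbitrary: n)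
  case 0 then show ?case by simp
next
  case (Suc m)
  have "a ^ Suc m * b ^ n = a * (a ^ m * b ^ n)" by (simp add: mult.assoc)
  also have "\<dots> = (if n \<le> Suc m then a ^ (Suc m - n) else b ^ (n - Suc m))"
  proof (cases "n \<le> m")
    case True then show ?thesis using Suc by (simp add: Suc_diff_le)
  next
    case False
    then obtain k where k: "n - m = Suc k" by (metis Suc_diff_Suc not_le)
    have "a * b ^ Suc k = b ^ k" by (simp add: mult.assoc[symmetric] assms)
    have "k = n - Suc m" using k by simp
    have IH: "a ^ m * b ^ n = b ^ (Suc k)" using Suc.IH[of n] False k by simp
    show ?thesis using IH \<open>a * b ^ Suc k = b ^ k\<close> \<open>k = n - Suc m\<close> False
      by (cases "n = Suc m") (simp_all only:, auto)
  qed
  finally show ?case .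
qed

locale kalg = vector_space scale for scale :: "'k::field \<Rightarrow> 'h::ring_1 \<Rightarrow> 'h" (infixr \<open>*s\<close> 75) +
  fixes I :: "'h set"
  assumes sl: "c *s (a * b) = (c *s a) * b" and sr: "c *s (a * b) = a * (c *s b)"
  and LI: "left_ideal scale I"
begin

lemma I_sub: "subspace I"
  using LI unfolding left_ideal_def subspace_def by auto

lemma I_mul: "a \<in> I \<Longrightarrow> h * a \<in> I"
  using LI unfolding left_ideal_def by auto

definition T :: "'h set \<Rightarrow> 'h set" where "T F = {h. \<exists>g\<in>span F. h - g \<in> I}"

lemma T_sub: "subspace (T F)"
proof (rule subspaceI)
  show "0 \<in> T F" unfolding T_def using subspace_0[OF I_sub] span_zero by force
next
  fix a b assume "a \<in> T F" "b \<in> T F"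
  then obtain g1 g2 where "g1 \<in> span F" "a - g1 \<in> I" "g2 \<in> span F" "b - g2 \<in> I" unfolding T_def by auto
  then show "a + b \<in> T F" unfolding T_def
    by (intro CollectI bexI[of _ "g1 + g2"]) (auto intro: span_add dest: subspace_add[OF I_sub] simp: algebra_simps)
next
  fix c a assume "a \<in> T F"
  then obtain g1 where "g1 \<in> span F" "a - g1 \<in> I" unfolding T_def by auto
  then show "c *s a \<in> T F" unfolding T_def
    by (intro CollectI bexI[of _ "c *s g1"]) (auto intro: span_scale dest: subspace_scale[OF I_sub] simp: scale_right_diff_distrib[symmetric])
qed

lemma T_F: "a \<in> F \<Longrightarrow> a \<in> T F"
  unfolding T_def using subspace_0[OF I_sub] span_base by force

lemma T_I: "a \<in> I \<Longrightarrow> a \<in> T F"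
  unfolding T_def using span_zero by force

lemma T_span: "S \<subseteq> T F \<Longrightarrow> span S \<subseteq> T F"
  using span_minimal T_sub by blast

lemma mult_span:
  assumes "\<And>s. s \<in> S \<Longrightarrow> g * s \<in> T F" "p \<in> span S"
  shows "g * p \<in> T F"
proof -
  have "subspace {p. g * p \<in> T F}"
    by (rule subspaceI) (auto simp: distrib_left sr[symmetric] intro: subspace_0[OF T_sub] subspace_add[OF T_sub] subspace_scale[OF T_sub])
  then show ?thesis using span_minimal[of S "{p. g * p \<in> T F}"] assms by auto
qed

lemma mult_sum_scale: "g * (\<Sum>j\<in>A. c j *s v j) = (\<Sum>j\<in>A. c j *s (g * v j))"
  by (simp add: sum_distrib_left sr)

lemma up:
  assumes fI: "(\<Sum>j\<le>d. c j *s x ^ j) \<in> I" and cd: "c d \<noteq> 0"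
    and gF: "\<And>j. j < d \<Longrightarrow> g * x ^ j \<in> F"
  shows "g * x ^ n \<in> T F"
proof (induction n rule: less_induct)
  case (less n)
  show ?case
  proof (cases "n < d")
    case True then show ?thesis using gF T_F by blast
  next
    case False
    define m where "m = n - d"
    have n: "n = m + d" using False m_def by simp
    have "g * x ^ m * (\<Sum>j\<le>d. c j *s x ^ j) \<in> I" using I_mul fI by blast
    moreover have "g * x ^ m * (\<Sum>j\<le>d. c j *s x ^ j) = (\<Sum>j\<le>d. c j *s (g * x ^ (m + j)))"
      by (simp add: mult_sum_scale power_add mult.assoc)
    moreover have "{..d} = insert d {..<d}" by auto
    ultimately have A: "c d *s (g * x ^ n) + (\<Sum>j<d. c j *s (g * x ^ (m + j))) \<in> I"
      using n by (simp add: add.commute)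
    have B: "(\<Sum>j<d. c j *s (g * x ^ (m + j))) \<in> T F"
      by (rule subspace_sum[OF T_sub], rule subspace_scale[OF T_sub], rule less.IH) (use n in auto)
    have "c d *s (g * x ^ n) \<in> T F"
      using subspace_diff[OF T_sub T_I[OF A] B] by simp
    then have "inverse (c d) *s (c d *s (g * x ^ n)) \<in> T F" by (rule subspace_scale[OF T_sub])
    then show ?thesis using cd by simp
  qed
qed

lemma down:
  assumes fI: "(\<Sum>j\<le>d. c j *s x ^ j) \<in> I" and c0: "c 0 \<noteq> 0"
    and xy: "x * y = 1" "y * x = 1"
    and xs: "\<And>n. g * x ^ n \<in> T F"
  shows "g * y ^ n \<in> T F"
proof (induction n rule: less_induct)
  case (less n)
  show ?case
  proof (cases "n = 0")
    case True then show ?thesis using xs[of 0] by simp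
  next
    case False
    have "g * y ^ n * (\<Sum>j\<le>d. c j *s x ^ j) \<in> I" using I_mul fI by blast
    moreover have "g * y ^ n * (\<Sum>j\<le>d. c j *s x ^ j) = (\<Sum>j\<le>d. c j *s (g * (y ^ n * x ^ j)))"
      by (simp add: mult_sum_scale mult.assoc)
    moreover have "{..d} = insert 0 {1..d}" by auto
    ultimately have A: "c 0 *s (g * y ^ n) + (\<Sum>j\<in>{1..d}. c j *s (g * (y ^ n * x ^ j))) \<in> I"
      by simp
    have B: "(\<Sum>j\<in>{1..d}. c j *s (g * (y ^ n * x ^ j))) \<in> T F"
    proof (rule subspace_sum[OF T_sub], rule subspace_scale[OF T_sub])
      fix j assume j: "j \<in> {1..d}"
      show "g * (y ^ n * x ^ j) \<in> T F"
      proof (cases "j \<le> n")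
        case True
        then show ?thesis using pow_cancel[OF xy(2), of n j] less.IH[of "n - j"] j by auto
      next
        case False
        then show ?thesis using pow_cancel[OF xy(2), of n j] xs by auto
      qed
    qed
    have "c 0 *s (g * y ^ n) \<in> T F"
      using subspace_diff[OF T_sub T_I[OF A] B] by simp
    then have "inverse (c 0) *s (c 0 *s (g * y ^ n)) \<in> T F" by (rule subspace_scale[OF T_sub])
    then show ?thesis using c0 by simp
  qed
qed

lemma codim_from:
  assumes G: "finite G" and fg: "\<And>h. \<exists>p. (\<forall>g\<in>G. p g \<in> span B) \<and> h = (\<Sum>g\<in>G. g * p g)"
    and F: "finite F" and gb: "\<And>g b. g \<in> G \<Longrightarrow> b \<in> B \<Longrightarrow> g * b \<in> T F"
  shows "finite_codim scale I"
  unfolding finite_codim_def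
proof (intro exI conjI allI)
  show "finite F" by fact
  fix h
  obtain p where p: "\<forall>g\<in>G. p g \<in> span B" "h = (\<Sum>g\<in>G. g * p g)" using fg by blast
  have "h \<in> T F" unfolding p(2)
    by (rule subspace_sum[OF T_sub], rule mult_span[OF gb]) (use p in auto)
  then show "\<exists>g\<in>span F. h - g \<in> I" unfolding T_def by auto
qed

lemma normalize:
  assumes N: "finite N" "N \<noteq> {}" and e: "\<And>j. j \<in> N \<Longrightarrow> e j \<noteq> 0"
  defines "c \<equiv> \<lambda>j. if j \<in> N then e j else 0"
  shows "(\<Sum>j\<in>N. e j *s x ^ j) = (\<Sum>j\<le>Max N. c j *s x ^ j)" "c (Max N) \<noteq> 0"
    "0 \<in> N \<Longrightarrow> c 0 \<noteq> 0"
proof -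
  show "(\<Sum>j\<in>N. e j *s x ^ j) = (\<Sum>j\<le>Max N. c j *s x ^ j)"
    by (rule sum.mono_neutral_cong_left) (use N in \<open>auto simp: c_def\<close>)
  show "c (Max N) \<noteq> 0" using N e unfolding c_def by auto
  show "0 \<in> N \<Longrightarrow> c 0 \<noteq> 0" using e unfolding c_def by auto
qed

lemma nonzero_from_codim:
  fixes mon :: "nat \<Rightarrow> 'h"
  assumes inj: "inj mon" and ind: "\<not> dependent (range mon)" and fc: "finite_codim scale I"
  shows "\<exists>z\<in>I. z \<noteq> 0 \<and> z \<in> span (range mon)"
proof -
  obtain F where F: "finite F" "\<forall>h. \<exists>g\<in>span F. h - g \<in> I"
    using fc unfolding finite_codim_def by blast
  obtain gg where gg: "\<And>h. gg h \<in> span F \<and> h - gg h \<in> I" using F(2) by metis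
  define M where "M = mon ` {..card F}"
  have fM: "finite M" unfolding M_def by simp
  have cM: "card M = Suc (card F)" unfolding M_def
    by (subst card_image) (use inj in \<open>auto intro: inj_on_subset\<close>)
  have iM: "\<not> dependent M" using independent_mono[OF ind, of M] unfolding M_def by blast
  have spM: "span M \<subseteq> span (range mon)" unfolding M_def by (rule span_mono) auto
  show ?thesis
  proof (cases "inj_on gg M")
    case True
    have "dependent (gg ` M)"
    proof (rule ccontr)
      assume "\<not> dependent (gg ` M)"
      from independent_span_bound[OF F(1) this] gg have "card (gg ` M) \<le> card F" by auto
      then show False using card_image[OF True] cM by simp
    qed
    then obtain u where u: "\<exists>v\<in>gg ` M. u v \<noteq> 0" "(\<Sum>v\<in>gg ` M. u v *s v) = 0"
      using dependent_finite[of "gg ` M"] fM by auto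
    define z where "z = (\<Sum>m\<in>M. u (gg m) *s m)"
    have s0: "(\<Sum>m\<in>M. u (gg m) *s gg m) = 0" using u(2) sum.reindex[OF True, of "\<lambda>v. u v *s v"] by simp
    have "z = z - (\<Sum>m\<in>M. u (gg m) *s gg m)" using s0 by simp
    also have "\<dots> = (\<Sum>m\<in>M. u (gg m) *s (m - gg m))"
      unfolding z_def by (simp add: sum_subtractf[symmetric] scale_right_diff_distrib)
    finally have zI: "z \<in> I"
      using subspace_sum[OF I_sub, of M "\<lambda>m. u (gg m) *s (m - gg m)"] subspace_scale[OF I_sub] gg by auto
    have "z \<noteq> 0"
    proof
      assume "z = 0"
      then have "dependent M" using dependent_finite[OF fM] u(1) unfolding z_def by auto
      then show False using iM by simp
    qed
    moreover have "z \<in> span (range mon)" using spM unfolding z_def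
      by (meson span_scale span_sum span_base subsetD)
    ultimately show ?thesis using zI by blast
  next
    case False
    then obtain m1 m2 where m: "m1 \<in> M" "m2 \<in> M" "m1 \<noteq> m2" "gg m1 = gg m2"
      unfolding inj_on_def by blast
    have "m1 - m2 = (m1 - gg m1) - (m2 - gg m2)" using m by simp
    then have "m1 - m2 \<in> I" using subspace_diff[OF I_sub] gg by metis
    moreover have "m1 - m2 \<in> span (range mon)" using m spM
      by (meson span_diff span_base subsetD)
    moreover have "m1 - m2 \<noteq> 0" using m(3) by simp
    ultimately show ?thesis by blast
  qed
qed

end

lemma zpow_shift:
  fixes x y :: "'a::ring_1"
  assumes xy: "x * y = 1" "y * x = 1" and ai: "a \<le> i"
  shows "zpow x y (-a) * zpow x y i = x ^ nat (i - a)"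
proof (cases "a > 0")
  case True
  then have "zpow x y (-a) * zpow x y i = y ^ nat a * x ^ nat i" using ai by (simp add: zpow_def)
  also have "\<dots> = x ^ nat (i - a)" using pow_cancel[OF xy(2), of "nat a" "nat i"] ai True
    by (cases "nat i = nat a") (auto simp: nat_diff_distrib)
  finally show ?thesis .
next
  case False
  show ?thesis
  proof (cases "i \<ge> 0")
    case True
    then show ?thesis using False
      by (simp add: zpow_def power_add[symmetric]) (metis nat_add_distrib add.commute diff_conv_add_uminus neg_0_le_iff_le not_less)
  next
    case False2: False
    have e: "nat (-a) - nat (-i) = nat (i-a)" using nat_diff_distrib[of "-i" "-a"] ai False2 by simp
    have le: "nat (-i) \<le> nat (-a)" using ai by simp
    have "zpow x y (-a) * zpow x y i = x ^ nat (-a) * y ^ nat (-i)" using False False2 by (simp add: zpow_def)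
    also have "\<dots> = x ^ nat (i - a)" using pow_cancel[OF xy(1), of "nat (-a)" "nat (-i)"] le e by simp
    finally show ?thesis .
  qed
qed

theorem lemma2p7:
  fixes scale :: "'k::field \<Rightarrow> 'h::ring_1 \<Rightarrow> 'h"
    and \<Delta> :: "'h \<Rightarrow> ('h \<times> 'h) list" and \<epsilon> :: "'h \<Rightarrow> 'k" and S :: "'h \<Rightarrow> 'h"
    and P :: "'h set" and x :: 'h and I :: "'h set"
  assumes "hopf_algebra scale \<Delta> \<epsilon> S"
    and "is_poly_subalg scale P x \<or> is_laurent_subalg scale P x"
    and "fg_right_module P"
    and "left_ideal scale I"
  shows "finite_codim scale I \<longleftrightarrow> I \<inter> P \<noteq> {0}"
proof -
  have ka: "k_algebra scale" using assms(1) unfolding hopf_algebra_def by blast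
  interpret kalg scale I
    using ka assms(4) unfolding k_algebra_def kalg_def kalg_axioms_def by blast
  have I0: "0 \<in> I" using assms(4) unfolding left_ideal_def by blast
  obtain G where G: "finite G" "\<And>h. \<exists>p. (\<forall>g\<in>G. p g \<in> P) \<and> h = (\<Sum>g\<in>G. g * p g)"
    using assms(3) unfolding fg_right_module_def by blast
  show ?thesis
  proof
    assume fc: "finite_codim scale I"
    obtain mon :: "nat \<Rightarrow> 'h" where mon: "inj mon" "\<not> dependent (range mon)" "span (range mon) \<subseteq> P"
    proof (cases "is_poly_subalg scale P x")
      case True
      then show ?thesis using that[of "\<lambda>n. x ^ n"] unfolding is_poly_subalg_def by blast
    next
      case False
      then obtain y where y: "x * y = 1" "y * x = 1" "inj (zpow x y)" "\<not> dependent (range (zpow x y))"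
        "P = span (range (zpow x y))" using assms(2) unfolding is_laurent_subalg_def by blast
      have r: "range (\<lambda>n::nat. zpow x y (int n)) \<subseteq> range (zpow x y)" by auto
      show ?thesis
      proof (rule that[of "\<lambda>n. zpow x y (int n)"])
        show "inj (\<lambda>n. zpow x y (int n))" proof (rule injI)
          fix m n :: nat assume "zpow x y (int m) = zpow x y (int n)"
          then have "int m = int n" by (rule injD[OF y(3)])
          then show "m = n" by simp
        qed
        show "\<not> dependent (range (\<lambda>n. zpow x y (int n)))" using independent_mono[OF y(4) r] .
        show "span (range (\<lambda>n. zpow x y (int n))) \<subseteq> P" using span_mono[OF r] y(5) by simp
      qed
    qed
    obtain z where z: "z \<in> I" "z \<noteq> 0" "z \<in> span (range mon)"
      using nonzero_from_codim[OF mon(1,2) fc] by blast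
    have zP: "z \<in> P" using z(3) mon(3) by (rule subsetD[rotated])
    show "I \<inter> P \<noteq> {0}"
    proof
      assume "I \<inter> P = {0}"
      then have "z \<in> {0}" using z(1) zP by (metis IntI)
      then show False using z(2) by simp
    qed
  next
    assume "I \<inter> P \<noteq> {0}"
    moreover have P0: "0 \<in> P" using assms(2) span_zero
      unfolding is_poly_subalg_def is_laurent_subalg_def by auto
    ultimately obtain f where f: "f \<in> I" "f \<in> P" "f \<noteq> 0" using I0 by blast
    show "finite_codim scale I"
    proof (cases "is_poly_subalg scale P x")
      case True
      then have inj: "inj (\<lambda>n::nat. x ^ n)" and Pd: "P = span (range (\<lambda>n::nat. x ^ n))"
        unfolding is_poly_subalg_def by auto
      obtain u where u: "finite {v. u v \<noteq> 0}" "\<forall>v. u v \<noteq> 0 \<longrightarrow> v \<in> range (\<lambda>n::nat. x ^ n)"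
        "f = (\<Sum>v | u v \<noteq> 0. scale (u v) v)"
        using f(2) unfolding Pd span_explicit' by blast
      define N where "N = {j. u (x ^ j) \<noteq> 0}"
      have im: "{v. u v \<noteq> 0} = (\<lambda>j. x ^ j) ` N" using u(2) unfolding N_def by auto
      have fN: "finite N" using u(1) unfolding im by (rule finite_imageD) (use inj in \<open>auto intro: inj_on_subset\<close>)
      have fs: "f = (\<Sum>j\<in>N. scale (u (x ^ j)) (x ^ j))" unfolding u(3) im
        by (subst sum.reindex) (use inj in \<open>auto intro: inj_on_subset\<close>)
      have Nne: "N \<noteq> {}" using f(3) fs by auto
      define c where "c = (\<lambda>j. if j \<in> N then u (x ^ j) else 0)"
      define d where "d = Max N"
      have nz: "\<And>j. j \<in> N \<Longrightarrow> u (x ^ j) \<noteq> 0" unfolding N_def by auto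
      have nm1: "(\<Sum>j\<in>N. scale (u (x ^ j)) (x ^ j)) = (\<Sum>j\<le>d. scale (c j) (x ^ j))"
        using normalize(1)[of N "\<lambda>j. u (x ^ j)" x] fN Nne nz unfolding c_def d_def by blast
      have nm2: "c d \<noteq> 0" using normalize(2)[of N "\<lambda>j. u (x ^ j)"] fN Nne nz unfolding c_def d_def by blast
      note nm = nm1 nm2
      have fI: "(\<Sum>j\<le>d. scale (c j) (x ^ j)) \<in> I" using f(1) fs nm(1) by simp
      define F where "F = (\<lambda>(g, j). g * x ^ j) ` (G \<times> {..<d})"
      have "finite F" unfolding F_def using G(1) by simp
      show ?thesis
      proof (rule codim_from[OF G(1) _ \<open>finite F\<close>])
        show "\<exists>p. (\<forall>g\<in>G. p g \<in> span (range (\<lambda>n::nat. x ^ n))) \<and> h = (\<Sum>g\<in>G. g * p g)" for h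
          using G(2)[of h] Pd by simp
        fix g b assume g: "g \<in> G" and "b \<in> range (\<lambda>n::nat. x ^ n)"
        have gF: "\<And>j. j < d \<Longrightarrow> g * x ^ j \<in> F" unfolding F_def using g
          by (intro image_eqI[of _ _ "(g, j)" for j]) auto
        show "g * b \<in> T F" using up[OF fI nm(2), of g F, OF gF] \<open>b \<in> _\<close> by auto
      qed
    next
      case False
      then obtain y where y: "x * y = 1" "y * x = 1" "inj (zpow x y)"
        "P = span (range (zpow x y))" using assms(2) unfolding is_laurent_subalg_def by blast
      obtain u where u: "finite {v. u v \<noteq> 0}" "\<forall>v. u v \<noteq> 0 \<longrightarrow> v \<in> range (zpow x y)"
        "f = (\<Sum>v | u v \<noteq> 0. scale (u v) v)"
        using f(2) unfolding y(4) span_explicit' by blast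
      define N1 where "N1 = {i. u (zpow x y i) \<noteq> 0}"
      have im: "{v. u v \<noteq> 0} = zpow x y ` N1" using u(2) unfolding N1_def by auto
      have fN1: "finite N1" using u(1) unfolding im by (rule finite_imageD) (use y(3) in \<open>auto intro: inj_on_subset\<close>)
      have fs: "f = (\<Sum>i\<in>N1. scale (u (zpow x y i)) (zpow x y i))" unfolding u(3) im
        by (subst sum.reindex) (use y(3) in \<open>auto intro: inj_on_subset\<close>)
      have N1ne: "N1 \<noteq> {}" using f(3) fs by auto
      define a where "a = Min N1"
      have aN1: "a \<in> N1" "\<And>i. i \<in> N1 \<Longrightarrow> a \<le> i" unfolding a_def using fN1 N1ne by auto
      have f'I: "zpow x y (-a) * f \<in> I" using I_mul f(1) by blast
      have f'1: "zpow x y (-a) * f = (\<Sum>i\<in>N1. scale (u (zpow x y i)) (x ^ nat (i - a)))"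
        unfolding fs mult_sum_scale using zpow_shift[OF y(1,2) aN1(2)] by simp
      define N where "N = (\<lambda>i. nat (i - a)) ` N1"
      have injN: "inj_on (\<lambda>i. nat (i - a)) N1" using aN1(2) unfolding inj_on_def
        by (metis diff_add_cancel int_nat_eq not_less diff_ge_0_iff_ge)
      define e where "e = (\<lambda>j::nat. u (zpow x y (int j + a)))"
      have f'2: "zpow x y (-a) * f = (\<Sum>j\<in>N. scale (e j) (x ^ j))"
        unfolding f'1 N_def e_def by (subst sum.reindex[OF injN]) (use aN1(2) in auto)
      have fN: "finite N" unfolding N_def using fN1 by simp
      have Nne: "N \<noteq> {}" unfolding N_def using N1ne by simp
      have nz: "\<And>j. j \<in> N \<Longrightarrow> e j \<noteq> 0" unfolding N_def e_def N1_def using aN1(2) N1_def by auto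
      have N0: "0 \<in> N" unfolding N_def using aN1(1) by force
      define c where "c = (\<lambda>j. if j \<in> N then e j else 0)"
      define d where "d = Max N"
      have nm1: "(\<Sum>j\<in>N. scale (e j) (x ^ j)) = (\<Sum>j\<le>d. scale (c j) (x ^ j))"
        using normalize(1)[of N e x] fN Nne nz unfolding c_def d_def by blast
      have nm2: "c d \<noteq> 0" using normalize(2)[of N e] fN Nne nz unfolding c_def d_def by blast
      have nm3: "0 \<in> N \<Longrightarrow> c 0 \<noteq> 0" using normalize(3)[of N e] fN Nne nz unfolding c_def d_def by blast
      note nm = nm1 nm2 nm3
      have fI: "(\<Sum>j\<le>d. scale (c j) (x ^ j)) \<in> I" using f'I f'2 nm(1) by simp
      define F where "F = (\<lambda>(g, j). g * x ^ j) ` (G \<times> {..<d})"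
      have "finite F" unfolding F_def using G(1) by simp
      show ?thesis
      proof (rule codim_from[OF G(1) _ \<open>finite F\<close>])
        show "\<exists>p. (\<forall>g\<in>G. p g \<in> span (range (zpow x y))) \<and> h = (\<Sum>g\<in>G. g * p g)" for h
          using G(2)[of h] y(4) by simp
        fix g b assume g: "g \<in> G" and "b \<in> range (zpow x y)"
        then obtain i where b: "b = zpow x y i" by blast
        have gF: "\<And>j. j < d \<Longrightarrow> g * x ^ j \<in> F" unfolding F_def using g
          by (intro image_eqI[of _ _ "(g, j)" for j]) auto
        have xs: "\<And>n. g * x ^ n \<in> T F" using up[OF fI nm(2), of g F, OF gF] .
        have ys: "\<And>n. g * y ^ n \<in> T F" using down[OF fI nm(3)[OF N0] y(1,2) xs] .
        show "g * b \<in> T F" unfolding b zpow_def using xs ys by simp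
      qed
    qed
  qed
qed

end
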